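(* Let $D$ be an instance all of whose tuples are endogenous, let $\mathcal{Q}$ be a monotone query, and let $\bar a\in\mathcal{Q}(D)$. Then for $D'\subseteq D$, we have $(D,D',\bar a)\in\mathcal{MSSEP}^{c}(\mathcal{Q})$ if and only if there is $t\in D\smallsetminus D'$ such that $t\in\mathcal{MRC}(D,\mathcal{Q}(\bar a))$, $\Lambda:=D\smallsetminus(D'\cup\{t\})\in\mathit{Cont}(D,\mathcal{Q}(\bar a),t)$, and there is no $\Lambda'\in\mathit{Cont}(D,\mathcal{Q}(\bar a),t)$ with $|\Lambda'|<|\Lambda|$.
   Context: A query $\mathcal{Q}$ is monotone if $D_1\subseteq D_2$ implies $\mathcal{Q}(D_1)\subseteq\mathcal{Q}(D_2)$; $D\models\mathcal{Q}(\bar a)$ means $\bar a\in\mathcal{Q}(D)$. Here $D^n=D$. A tuple $\tau\in D^n$ is an actual cause for $\bar a$ if there is $\Gamma\subseteq D^n$ (contingency set) with $D\smallsetminus\Gamma\models\mathcal{Q}(\bar a)$ and $D\smallsetminus(\Gamma\cup\{\tau\})\not\models\mathcal{Q}(\bar a)$. $\mathit{Cont}(D,\mathcal{Q}(\bar a),\tau)$ is the set of subset-minimal such contingency sets $\Lambda\subseteq D^n$ (i.e. $D\smallsetminus\Lambda\models\mathcal{Q}(\bar a)$, $D\smallsetminus(\Lambda\cup\{\tau\})\not\models\mathcal{Q}(\bar a)$, and $D\smallsetminus(\Lambda'\cup\{\tau\})\models\mathcal{Q}(\bar a)$ for all $\Lambda'\subsetneq\Lambda$). The responsibility of an actual cause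 $\tau$ is $1/(|\Gamma|+1)$ with $\Gamma$ a minimum-size contingency set for $\tau$ (and $0$ for non-causes); $\mathcal{MRC}(D,\mathcal{Q}(\bar a))$ is the set of actual causes for $\bar a$ with maximum responsibility. $\mathcal{MSSEP}^{c}(\mathcal{Q})$ is the set of triples $(D,D',\bar a)$ with $\bar a\in\mathcal{Q}(D)$, $D'\subseteq D$, $\bar a\notin\mathcal{Q}(D')$, and $D'$ of maximum cardinality among subsets of $D$ with this last property (minimum source-side-effect). *)

theory Defs
  imports Main "HOL-Library.Extended_Real"
begin

text \<open>Instances are finite sets of tuples of type 'a; a query maps an instance
 to its set of answers of type 'b. All tuples are endogenous, so D^n = D.\<close>

definition monotone_query :: "('a set \<Rightarrow> 'b set) \<Rightarrow> bool" where
  "monotone_query Q \<longleftrightarrow> (\<forall>D1 D2. D1 \<subseteq> D2 \<longrightarrow> Q D1 \<subseteq> Q D2)"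

definition is_contingency :: "('a set \<Rightarrow> 'b set) \<Rightarrow> 'a set \<Rightarrow> 'b \<Rightarrow> 'a \<Rightarrow> 'a set \<Rightarrow> bool" where
  "is_contingency Q D a \<tau> \<Gamma> \<longleftrightarrow>
     \<Gamma> \<subseteq> D \<and> a \<in> Q (D - \<Gamma>) \<and> a \<notin> Q (D - (\<Gamma> \<union> {\<tau>}))"

definition actual_cause :: "('a set \<Rightarrow> 'b set) \<Rightarrow> 'a set \<Rightarrow> 'b \<Rightarrow> 'a \<Rightarrow> bool" where
  "actual_cause Q D a \<tau> \<longleftrightarrow> \<tau> \<in> D \<and> (\<exists>\<Gamma>. is_contingency Q D a \<tau> \<Gamma>)"

definition Cont :: "('a set \<Rightarrow> 'b set) \<Rightarrow> 'a set \<Rightarrow> 'b \<Rightarrow> 'a \<Rightarrow> 'a set set" where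
  "Cont Q D a \<tau> = {\<Lambda>. \<Lambda> \<subseteq> D \<and> a \<in> Q (D - \<Lambda>) \<and> a \<notin> Q (D - (\<Lambda> \<union> {\<tau>})) \<and>
      (\<forall>\<Lambda>'. \<Lambda>' \<subset> \<Lambda> \<longrightarrow> a \<in> Q (D - (\<Lambda>' \<union> {\<tau>})))}"

definition responsibility :: "('a set \<Rightarrow> 'b set) \<Rightarrow> 'a set \<Rightarrow> 'b \<Rightarrow> 'a \<Rightarrow> real" where
  "responsibility Q D a \<tau> =
     (if actual_cause Q D a \<tau>
      then 1 / (real (LEAST n. \<exists>\<Gamma>. is_contingency Q D a \<tau> \<Gamma> \<and> card \<Gamma> = n) + 1)
      else 0)"

definition MRC :: "('a set \<Rightarrow> 'b set) \<Rightarrow> 'a set \<Rightarrow> 'b \<Rightarrow> 'a set" where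
  "MRC Q D a = {\<tau>. actual_cause Q D a \<tau> \<and>
      (\<forall>\<tau>'. actual_cause Q D a \<tau>' \<longrightarrow> responsibility Q D a \<tau>' \<le> responsibility Q D a \<tau>)}"

definition MSSEP :: "('a set \<Rightarrow> 'b set) \<Rightarrow> ('a set \<times> 'a set \<times> 'b) set" where
  "MSSEP Q = {(D, D', a). a \<in> Q D \<and> D' \<subseteq> D \<and> a \<notin> Q D' \<and>
      (\<forall>D''. D'' \<subseteq> D \<and> a \<notin> Q D'' \<longrightarrow> card D'' \<le> card D')}"

end

theory Submission
  imports Defs
begin

lemma resp_least:
  assumes "actual_cause Q D a \<tau>"
  shows "\<exists>\<Gamma>. is_contingency Q D a \<tau> \<Gamma> \<and> card \<Gamma> = (LEAST n. \<exists>\<Gamma>. is_contingency Q D a \<tau> \<Gamma> \<and> card \<Gamma> = n)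
     \<and> responsibility Q D a \<tau> = 1 / (real (LEAST n. \<exists>\<Gamma>. is_contingency Q D a \<tau> \<Gamma> \<and> card \<Gamma> = n) + 1)"
proof -
  from assms obtain G where G: "is_contingency Q D a \<tau> G" unfolding actual_cause_def by blast
  hence "\<exists>n. \<exists>\<Gamma>. is_contingency Q D a \<tau> \<Gamma> \<and> card \<Gamma> = n" by blast
  from LeastI_ex[OF this] show ?thesis using assms unfolding responsibility_def by auto
qed

lemma least_le:
  assumes "is_contingency Q D a \<tau> \<Gamma>"
  shows "(LEAST n. \<exists>\<Gamma>. is_contingency Q D a \<tau> \<Gamma> \<and> card \<Gamma> = n) \<le> card \<Gamma>"
  using assms by (intro Least_le) blast

lemma card_diff_ge:
  assumes "finite D"
  shows "card D \<le> card (D - X) + card (D \<inter> X)"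
  using card_Int_Diff[OF assms, of X] by simp

theorem proposition8:
  fixes Q :: "'a set \<Rightarrow> 'b set" and D D' :: "'a set" and a :: 'b
  assumes "finite D"
    and "monotone_query Q"
    and "a \<in> Q D"
    and "D' \<subseteq> D"
  shows "(D, D', a) \<in> MSSEP Q \<longleftrightarrow>
    (\<exists>t \<in> D - D'. t \<in> MRC Q D a \<and>
       D - (D' \<union> {t}) \<in> Cont Q D a t \<and>
       \<not> (\<exists>\<Lambda>' \<in> Cont Q D a t. card \<Lambda>' < card (D - (D' \<union> {t}))))"
proof
  assume M: "(D, D', a) \<in> MSSEP Q"
  hence nD': "a \<notin> Q D'" and mx: "\<And>D''. D'' \<subseteq> D \<Longrightarrow> a \<notin> Q D'' \<Longrightarrow> card D'' \<le> card D'"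
    unfolding MSSEP_def by auto
  have fD': "finite D'" using assms(1,4) finite_subset by blast
  have "D' \<noteq> D" using nD' assms(3) by auto
  then obtain t where t: "t \<in> D - D'" using assms(4) by blast
  define L where "L = D - (D' \<union> {t})"
  have cardD': "card D' < card D" using assms(1,4) \<open>D' \<noteq> D\<close> by (simp add: psubset_card_mono)
  have cardL: "card L + 1 = card D - card D'"
  proof -
    have "L = (D - D') - {t}" unfolding L_def by auto
    hence "card L = card (D - D') - 1" using t assms(1) by simp
    moreover have "card (D - D') = card D - card D'" using assms(1,4) fD' by (simp add: card_Diff_subset)
    moreover have "card (D - D') \<ge> 1" using t assms(1)
      by (metis One_nat_def Suc_leI card_gt_0_iff empty_iff finite_Diff)
    ultimately show ?thesis by linarith
  qed
  have DL: "D - L = insert t D'" using t assms(4) unfolding L_def by auto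
  have DLt: "D - (L \<union> {t}) = D'" using t assms(4) unfolding L_def by auto
  have bound: "card D - card D' \<le> card \<Gamma> + 1" if c: "is_contingency Q D a \<tau> \<Gamma>" for \<tau> \<Gamma>
  proof -
    from c have "\<Gamma> \<subseteq> D" "a \<notin> Q (D - (\<Gamma> \<union> {\<tau>}))" unfolding is_contingency_def by auto
    hence "card (D - (\<Gamma> \<union> {\<tau>})) \<le> card D'" using mx by blast
    moreover have "card D \<le> card (D - (\<Gamma> \<union> {\<tau>})) + card (D \<inter> (\<Gamma> \<union> {\<tau>}))"
      by (rule card_diff_ge[OF assms(1)])
    moreover have "card (D \<inter> (\<Gamma> \<union> {\<tau>})) \<le> card (\<Gamma> \<union> {\<tau>})"
      using assms(1) \<open>\<Gamma> \<subseteq> D\<close> finite_subset by (intro card_mono) auto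
    moreover have "card (\<Gamma> \<union> {\<tau>}) \<le> card \<Gamma> + 1"
      using \<open>\<Gamma> \<subseteq> D\<close> assms(1) finite_subset[of \<Gamma> D] by (simp add: card_insert_if)
    ultimately show ?thesis by linarith
  qed
  have Lsub: "L \<subseteq> D" unfolding L_def by auto
  have aDL: "a \<in> Q (D - L)"
  proof (rule ccontr)
    assume "a \<notin> Q (D - L)"
    hence "card (D - L) \<le> card D'" using mx by blast
    thus False using DL t fD' by simp
  qed
  have contL: "is_contingency Q D a t L" unfolding is_contingency_def using Lsub aDL DLt nD' by simp
  have LCont: "L \<in> Cont Q D a t"
    unfolding Cont_def
  proof (intro CollectI conjI allI impI)
    show "L \<subseteq> D" "a \<in> Q (D - L)" "a \<notin> Q (D - (L \<union> {t}))" using Lsub aDL DLt nD' by auto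
    fix L' assume "L' \<subset> L"
    then obtain x where x: "x \<in> L" "x \<notin> L'" "L' \<subseteq> L" by blast
    have sub: "insert x D' \<subseteq> D - (L' \<union> {t})" using x assms(4) t unfolding L_def by auto
    show "a \<in> Q (D - (L' \<union> {t}))"
    proof (rule ccontr)
      assume "a \<notin> Q (D - (L' \<union> {t}))"
      hence "card (D - (L' \<union> {t})) \<le> card D'" using mx by blast
      moreover have "card (insert x D') \<le> card (D - (L' \<union> {t}))"
        using sub assms(1) by (intro card_mono) auto
      moreover have "x \<notin> D'" using x unfolding L_def by auto
      ultimately show False using fD' by simp
    qed
  qed
  have act: "actual_cause Q D a t" unfolding actual_cause_def using t contL by auto
  have MRCt: "t \<in> MRC Q D a"
    unfolding MRC_def
  proof (intro CollectI conjI allI impI act)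
    fix \<tau>' assume act': "actual_cause Q D a \<tau>'"
    obtain G' where G': "is_contingency Q D a \<tau>' G'"
      and c': "card G' = (LEAST n. \<exists>\<Gamma>. is_contingency Q D a \<tau>' \<Gamma> \<and> card \<Gamma> = n)"
      and r': "responsibility Q D a \<tau>' = 1 / (real (LEAST n. \<exists>\<Gamma>. is_contingency Q D a \<tau>' \<Gamma> \<and> card \<Gamma> = n) + 1)"
      using resp_least[OF act'] by blast
    obtain G where "is_contingency Q D a t G" and c: "card G = (LEAST n. \<exists>\<Gamma>. is_contingency Q D a t \<Gamma> \<and> card \<Gamma> = n)"
      and r: "responsibility Q D a t = 1 / (real (LEAST n. \<exists>\<Gamma>. is_contingency Q D a t \<Gamma> \<and> card \<Gamma> = n) + 1)"
      using resp_least[OF act] by blast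
    have "card D - card D' \<le> card G' + 1" using bound[OF G'] .
    moreover have "card G \<le> card L" using least_le[OF contL] c by simp
    ultimately have "real (card G) + 1 \<le> real (card G') + 1" using cardL by linarith
    thus "responsibility Q D a \<tau>' \<le> responsibility Q D a t"
      unfolding r r' c[symmetric] c'[symmetric] by (rule divide_left_mono) auto
  qed
  have nosmall: "\<not> (\<exists>\<Lambda>' \<in> Cont Q D a t. card \<Lambda>' < card L)"
  proof
    assume "\<exists>\<Lambda>' \<in> Cont Q D a t. card \<Lambda>' < card L"
    then obtain L' where "L' \<in> Cont Q D a t" "card L' < card L" by blast
    hence "is_contingency Q D a t L'" "card L' < card L"
      unfolding Cont_def is_contingency_def by auto
    have "card D - card D' \<le> card L' + 1" by (rule bound) fact
    with cardL \<open>card L' < card L\<close> show False by linarith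
  qed
  show "\<exists>t \<in> D - D'. t \<in> MRC Q D a \<and> D - (D' \<union> {t}) \<in> Cont Q D a t \<and>
       \<not> (\<exists>\<Lambda>' \<in> Cont Q D a t. card \<Lambda>' < card (D - (D' \<union> {t})))"
    using t MRCt LCont nosmall unfolding L_def by blast
next
  assume "\<exists>t \<in> D - D'. t \<in> MRC Q D a \<and> D - (D' \<union> {t}) \<in> Cont Q D a t \<and>
       \<not> (\<exists>\<Lambda>' \<in> Cont Q D a t. card \<Lambda>' < card (D - (D' \<union> {t})))"
  then obtain t where t: "t \<in> D - D'" and MRCt: "t \<in> MRC Q D a"
    and LC: "D - (D' \<union> {t}) \<in> Cont Q D a t"
    and ns: "\<not> (\<exists>\<Lambda>' \<in> Cont Q D a t. card \<Lambda>' < card (D - (D' \<union> {t})))" by blast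
  define L where "L = D - (D' \<union> {t})"
  have fD': "finite D'" using assms(1,4) finite_subset by blast
  have DLt: "D - (L \<union> {t}) = D'" using t assms(4) unfolding L_def by auto
  have nD': "a \<notin> Q D'" using LC DLt unfolding Cont_def L_def by auto
  have cardL: "card L + 1 + card D' = card D"
  proof -
    have "D = insert t (L \<union> D')" using t assms(4) unfolding L_def by auto
    moreover have "t \<notin> L \<union> D'" "L \<inter> D' = {}" using t unfolding L_def by auto
    moreover have "finite L" unfolding L_def using assms(1) by simp
    ultimately show ?thesis using fD' by (simp add: card_Un_disjoint)
  qed
  have mono: "\<And>A B. A \<subseteq> B \<Longrightarrow> Q A \<subseteq> Q B" using assms(2) unfolding monotone_query_def by blast
  have "\<forall>D''. D'' \<subseteq> D \<and> a \<notin> Q D'' \<longrightarrow> card D'' \<le> card D'"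
  proof (rule ccontr)
    assume "\<not> ?thesis"
    then obtain E where E: "E \<subseteq> D" "a \<notin> Q E" by blast
    let ?P = "\<lambda>X. X \<subseteq> D \<and> a \<notin> Q X"
    have bnd: "\<forall>y. ?P y \<longrightarrow> card y < card D + 1"
    proof (intro allI impI)
      fix y assume "?P y" thus "card y < card D + 1" using card_mono[OF assms(1), of y] by simp
    qed
    have "\<exists>x. ?P x \<and> (\<forall>y. ?P y \<longrightarrow> card y \<le> card x)"
      by (rule ex_has_greatest_nat[of ?P E card "card D + 1"]) (use E bnd in auto)
    then obtain F where F1: "?P F" and F2: "\<forall>y. ?P y \<longrightarrow> card y \<le> card F" by blast
    have F: "F \<subseteq> D" "a \<notin> Q F" using F1 by auto
    have Fmax: "\<And>y. y \<subseteq> D \<Longrightarrow> a \<notin> Q y \<Longrightarrow> card y \<le> card F" using F2 by blast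
    from \<open>\<not> ?thesis\<close> obtain D'' where "D'' \<subseteq> D" "a \<notin> Q D''" "card D'' > card D'" by auto
    hence FD': "card F > card D'" using Fmax[of D''] by linarith
    have fF: "finite F" using F assms(1) finite_subset by blast
    have "F \<noteq> D" using F assms(3) by auto
    then obtain \<tau> where \<tau>: "\<tau> \<in> D - F" using F by blast
    define G where "G = D - F - {\<tau>}"
    have DG: "D - G = insert \<tau> F" using \<tau> F unfolding G_def by auto
    have aDG: "a \<in> Q (D - G)"
    proof (rule ccontr)
      assume "a \<notin> Q (D - G)"
      hence "card (D - G) \<le> card F" using Fmax by blast
      thus False using DG \<tau> fF by simp
    qed
    have DGt: "D - (G \<union> {\<tau>}) = F" using \<tau> F unfolding G_def by auto
    have cG: "is_contingency Q D a \<tau> G" unfolding is_contingency_def G_def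
      using aDG DGt F unfolding G_def by auto
    have cardG: "card G + 1 + card F = card D"
    proof -
      have "D = insert \<tau> (G \<union> F)" using \<tau> F unfolding G_def by auto
      moreover have "\<tau> \<notin> G \<union> F" "G \<inter> F = {}" using \<tau> unfolding G_def by auto
      moreover have "finite G" unfolding G_def using assms(1) by simp
      ultimately show ?thesis using fF by (simp add: card_Un_disjoint)
    qed
    have GL: "card G < card L" using cardG cardL FD' by linarith
    have act\<tau>: "actual_cause Q D a \<tau>" unfolding actual_cause_def using \<tau> cG by auto
    have actt: "actual_cause Q D a t" and rle: "responsibility Q D a \<tau> \<le> responsibility Q D a t"
      using MRCt act\<tau> unfolding MRC_def by auto
    obtain Gt where Gt: "is_contingency Q D a t Gt"
      and ct: "card Gt = (LEAST n. \<exists>\<Gamma>. is_contingency Q D a t \<Gamma> \<and> card \<Gamma> = n)"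
      and rt: "responsibility Q D a t = 1 / (real (LEAST n. \<exists>\<Gamma>. is_contingency Q D a t \<Gamma> \<and> card \<Gamma> = n) + 1)"
      using resp_least[OF actt] by blast
    obtain G2 where "is_contingency Q D a \<tau> G2" and c2: "card G2 = (LEAST n. \<exists>\<Gamma>. is_contingency Q D a \<tau> \<Gamma> \<and> card \<Gamma> = n)"
      and r2: "responsibility Q D a \<tau> = 1 / (real (LEAST n. \<exists>\<Gamma>. is_contingency Q D a \<tau> \<Gamma> \<and> card \<Gamma> = n) + 1)"
      using resp_least[OF act\<tau>] by blast
    have "card G2 \<le> card G" using least_le[OF cG] c2 by simp
    moreover have "1 / (real (card G2) + 1) \<le> 1 / (real (card Gt) + 1)"
      using rle rt r2 ct c2 by simp
    hence "card Gt \<le> card G2"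
    proof (rule contrapos_pp)
      assume h: "\<not> card Gt \<le> card G2"
      hence "real (card G2) + 1 < real (card Gt) + 1" by simp
      hence "1 / (real (card Gt) + 1) < 1 / (real (card G2) + 1)" by (intro divide_strict_left_mono) auto
      thus "\<not> 1 / (real (card G2) + 1) \<le> 1 / (real (card Gt) + 1)" by simp
    qed
    ultimately have GtL: "card Gt < card L" using GL by linarith
    have fGt: "finite Gt" using Gt assms(1) finite_subset unfolding is_contingency_def by blast
    have "Gt \<in> Cont Q D a t"
      unfolding Cont_def
    proof (intro CollectI conjI allI impI)
      show "Gt \<subseteq> D" "a \<in> Q (D - Gt)" "a \<notin> Q (D - (Gt \<union> {t}))"
        using Gt unfolding is_contingency_def by auto
      fix L' assume L': "L' \<subset> Gt"
      show "a \<in> Q (D - (L' \<union> {t}))"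
      proof (rule ccontr)
        assume n: "a \<notin> Q (D - (L' \<union> {t}))"
        have "a \<in> Q (D - L')" using mono[of "D - Gt" "D - L'"] L' \<open>a \<in> Q (D - Gt)\<close> by blast
        hence "is_contingency Q D a t L'" using n L' \<open>Gt \<subseteq> D\<close> unfolding is_contingency_def by auto
        hence "card Gt \<le> card L'" using least_le[of Q D a t L'] ct by simp
        moreover have "card L' < card Gt" using L' fGt by (simp add: psubset_card_mono)
        ultimately show False by simp
      qed
    qed
    thus False using ns GtL unfolding L_def by blast
  qed
  thus "(D, D', a) \<in> MSSEP Q" unfolding MSSEP_def using assms(3,4) nD' by blast
qed

end
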